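(* Let $n\ge 2$ and let $H_1,\dots,H_n$ be $1$-dimensional linear subspaces (lines through the origin) of $\mathbb{R}^n$ such that (i) at least two of them form an angle that is an irrational multiple of $\pi$; (ii) $H_1+\cdots+H_n=\mathbb{R}^n$; (iii) $\{H_1,\dots,H_n\}$ cannot be partitioned into two nonempty subsets such that every line in the first subset is orthogonal to every line in the second. If $E\subset S^{n-1}$ is nonempty, closed, and satisfies $R_{H_j}E=E$ for $j=1,\dots,n$, then $E=S^{n-1}$.
   Context: For a linear subspace $H$ of $\mathbb{R}^n$, $R_H$ denotes the reflection in $H$, i.e., the map $x\mapsto 2(x|H)-x$, where $x|H$ is the orthogonal projection of $x$ onto $H$. $+$ denotes Minkowski (vector) sum. $S^{n-1}$ is the unit sphere. *)

theory Defs
  imports "HOL-Analysis.Analysis"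
begin

definition orth_proj :: "('a::euclidean_space) set \<Rightarrow> 'a \<Rightarrow> 'a" where
  "orth_proj H x = closest_point H x"

definition reflection :: "('a::euclidean_space) set \<Rightarrow> 'a \<Rightarrow> 'a" where
  "reflection H x = 2 *\<^sub>R orth_proj H x - x"

definition line_angle :: "('a::euclidean_space) \<Rightarrow> 'a \<Rightarrow> real" where
  "line_angle u v = arccos (\<bar>u \<bullet> v\<bar> / (norm u * norm v))"

end

theory Submission
  imports Defs
begin

definition Inv :: "'a::euclidean_space set \<Rightarrow> 'a set \<Rightarrow> bool" where
  "Inv E L \<longleftrightarrow> (\<forall>x\<in>E. \<forall>y. norm y = 1 \<longrightarrow> y - x \<in> L \<longrightarrow> y \<in> E)"

lemma Inv_mono: "Inv E L \<Longrightarrow> L' \<subseteq> L \<Longrightarrow> Inv E L'"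
  unfolding Inv_def by blast

lemma union_aux:
  fixes E L1 L2 :: "'a::euclidean_space set"
  assumes s1: "subspace L1" and s2: "subspace L2" and m1: "m \<in> L1" and m2: "m \<in> L2"
    and i1: "Inv E L1" and i2: "Inv E L2" and cl: "closed E" and sub: "E \<subseteq> sphere 0 1"
    and xE: "x \<in> E" and y1: "norm y = 1" and yx: "y - x \<in> span (L1 \<union> L2)" and ym: "y \<bullet> m \<noteq> 0"
  shows "y \<in> E"
proof -
  define L where "L = span (L1 \<union> L2)"
  define K where "K = E \<inter> {z. z - x \<in> L}"
  have "closed ((\<lambda>z. z - x) -` L)"
    by (rule continuous_closed_vimage) (auto intro!: continuous_intros closed_subspace simp: L_def)
  hence "closed {z. z - x \<in> L}" by (simp add: vimage_def)
  hence "closed K" using cl by (auto simp: K_def)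
  moreover have "bounded K" using sub by (auto simp: K_def intro: bounded_subset[OF bounded_sphere])
  ultimately have "compact K" by (simp add: compact_eq_bounded_closed)
  moreover have "K \<noteq> {}" using xE by (auto simp: K_def L_def span_zero)
  ultimately obtain z where zK: "z \<in> K" and zmax: "\<And>w. w \<in> K \<Longrightarrow> w \<bullet> y \<le> z \<bullet> y"
  proof -
    have "continuous_on K (\<lambda>w. w \<bullet> y)" by (intro continuous_intros)
    thus ?thesis using continuous_attains_sup[of K "\<lambda>w. w \<bullet> y"] \<open>compact K\<close> \<open>K \<noteq> {}\<close> that by blast
  qed
  have zE: "z \<in> E" and zx: "z - x \<in> L" using zK by (auto simp: K_def)
  have z1: "norm z = 1" using zE sub by auto
  have key: "\<exists>s\<ge>0. (\<forall>w\<in>Li. (z - s *\<^sub>R y) \<bullet> w = 0) \<and> z \<bullet> m = s * (y \<bullet> m)"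
    if si: "subspace Li" and mi: "m \<in> Li" and ii: "Inv E Li" and Li: "Li \<subseteq> L" for Li
  proof -
    have spi: "span Li = Li" using si by (simp add: span_eq_iff)
    obtain p q where p: "p \<in> Li" and q: "\<And>w. w \<in> Li \<Longrightarrow> q \<bullet> w = 0" and zpq: "z = p + q"
      using orthogonal_subspace_decomp_exists[of Li z] spi unfolding orthogonal_def by metis
    obtain p' q' where p': "p' \<in> Li" and q': "\<And>w. w \<in> Li \<Longrightarrow> q' \<bullet> w = 0" and ypq: "y = p' + q'"
      using orthogonal_subspace_decomp_exists[of Li y] spi unfolding orthogonal_def by metis
    have ym': "y \<bullet> m = p' \<bullet> m" using q'[OF mi] by (simp add: ypq inner_add_left)
    have p'0: "p' \<noteq> 0" using ym ym' by auto
    hence np': "norm p' > 0" by simp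
    define z' where "z' = q + (norm p / norm p') *\<^sub>R p'"
    have "z' - z = (norm p / norm p') *\<^sub>R p' - p" by (simp add: z'_def zpq)
    hence z'z: "z' - z \<in> Li" using si p p' by (simp add: subspace_diff subspace_scale)
    have qp: "q \<bullet> p = 0" "q \<bullet> p' = 0" "q' \<bullet> p = 0" "q' \<bullet> p' = 0"
      "p \<bullet> q = 0" "p' \<bullet> q = 0" "p \<bullet> q' = 0" "p' \<bullet> q' = 0" using q q' p p' by (auto simp: inner_commute)
    have "z' \<bullet> z' = q \<bullet> q + (norm p / norm p')^2 * (p' \<bullet> p')"
      by (simp add: z'_def inner_add_left inner_add_right qp inner_commute power2_eq_square)
    also have "\<dots> = q \<bullet> q + p \<bullet> p" using np'
      by (simp add: power2_norm_eq_inner[symmetric] field_simps)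
    also have "\<dots> = z \<bullet> z" by (simp add: zpq inner_add_left inner_add_right qp inner_commute)
    finally have "norm z' = 1" using z1 by (simp add: norm_eq_sqrt_inner)
    hence z'E: "z' \<in> E" using ii zE z'z unfolding Inv_def by blast
    have "z' - x = (z' - z) + (z - x)" by simp
    hence "z' - x \<in> L" using z'z Li zx by (metis subsetD subspace_add subspace_span L_def)
    hence "z' \<bullet> y \<le> z \<bullet> y" using zmax z'E by (auto simp: K_def)
    moreover have "z' \<bullet> y = q \<bullet> q' + norm p * norm p'"
      using np' by (simp add: z'_def ypq inner_add_left inner_add_right qp inner_commute power2_norm_eq_inner[symmetric] power2_eq_square)
    moreover have "z \<bullet> y = p \<bullet> p' + q \<bullet> q'"
      by (simp add: zpq ypq inner_add_left inner_add_right qp inner_commute)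
    ultimately have "norm p * norm p' \<le> p \<bullet> p'" by simp
    hence "p \<bullet> p' = norm p * norm p'" using norm_cauchy_schwarz[of p p'] by simp
    hence eqn: "norm p *\<^sub>R p' = norm p' *\<^sub>R p" by (simp add: norm_cauchy_schwarz_eq)
    have "p = (1/norm p') *\<^sub>R (norm p' *\<^sub>R p)" using np' by simp
    also have "\<dots> = (1/norm p') *\<^sub>R (norm p *\<^sub>R p')" using eqn by simp
    also have "\<dots> = (norm p / norm p') *\<^sub>R p'" by simp
    finally have pp: "p = (norm p / norm p') *\<^sub>R p'" .
    show ?thesis
    proof (intro exI[of _ "norm p / norm p'"] conjI ballI)
      show "0 \<le> norm p / norm p'" by simp
      fix w assume "w \<in> Li"
      have "z - (norm p / norm p') *\<^sub>R y = q - (norm p / norm p') *\<^sub>R q'"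
        by (subst zpq, subst pp, simp add: ypq algebra_simps)
      thus "(z - (norm p / norm p') *\<^sub>R y) \<bullet> w = 0" using q q' \<open>w \<in> Li\<close> by (simp add: inner_diff_left)
    next
      have "z \<bullet> m = p \<bullet> m" using q[OF mi] by (simp add: zpq inner_add_left)
      thus "z \<bullet> m = norm p / norm p' * (y \<bullet> m)" by (subst (asm) pp) (simp add: ym')
    qed
  qed
  have L1L: "L1 \<subseteq> L" and L2L: "L2 \<subseteq> L" by (auto simp: L_def intro: span_base)
  obtain s1 where s1: "s1 \<ge> 0" "\<forall>w\<in>L1. (z - s1 *\<^sub>R y) \<bullet> w = 0" "z \<bullet> m = s1 * (y \<bullet> m)"
    using key[OF s1 m1 i1 L1L] by blast
  obtain s2 where s2: "s2 \<ge> 0" "\<forall>w\<in>L2. (z - s2 *\<^sub>R y) \<bullet> w = 0" "z \<bullet> m = s2 * (y \<bullet> m)"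
    using key[OF s2 m2 i2 L2L] by blast
  have "s1 = s2" using s1(3) s2(3) ym by simp
  have orth: "(z - s1 *\<^sub>R y) \<bullet> w = 0" if "w \<in> L" for w
    using orthogonal_to_span[of w "L1 \<union> L2" "z - s1 *\<^sub>R y"] that s1(2) s2(2) \<open>s1 = s2\<close>
    unfolding L_def orthogonal_def by auto
  define d where "d = z - y"
  have dL: "d \<in> L"
  proof -
    have "d = (z - x) - (y - x)" by (simp add: d_def)
    thus ?thesis using zx yx unfolding L_def by (metis span_diff)
  qed
  have e1: "d \<bullet> d + (1 - s1) * (y \<bullet> d) = 0"
  proof -
    have "z - s1 *\<^sub>R y = d + (1 - s1) *\<^sub>R y" by (simp add: d_def algebra_simps)
    hence "(d + (1 - s1) *\<^sub>R y) \<bullet> d = 0" using orth[OF dL] by simp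
    thus ?thesis by (simp add: inner_add_left)
  qed
  have "z \<bullet> z = 1" using z1 by (simp add: norm_eq_sqrt_inner)
  moreover have "y \<bullet> y = 1" using y1 by (simp add: norm_eq_sqrt_inner)
  moreover have "z = y + d" by (simp add: d_def)
  ultimately have e2: "2 * (y \<bullet> d) + d \<bullet> d = 0"
    by (simp add: inner_add_left inner_add_right inner_commute)
  have yd: "y \<bullet> d = -(d \<bullet> d)/2" using e2 by linarith
  have "(d \<bullet> d) * (1 + s1) = 2 * (d \<bullet> d + (1 - s1) * (y \<bullet> d))" by (simp add: yd field_simps)
  hence "(d \<bullet> d) * (1 + s1) = 0" using e1 by simp
  hence "d \<bullet> d = 0" using s1(1) by simp
  hence "z = y" by (simp add: d_def)
  thus ?thesis using zE by simp
qed

lemma union: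
  fixes E L1 L2 :: "'a::euclidean_space set"
  assumes s1: "subspace L1" and s2: "subspace L2" and m1: "m \<in> L1" and m2: "m \<in> L2" and m0: "norm m = 1"
    and i1: "Inv E L1" and i2: "Inv E L2" and cl: "closed E" and sub: "E \<subseteq> sphere 0 1"
  shows "Inv E (span (L1 \<union> L2))"
  unfolding Inv_def
proof (intro ballI allI impI)
  fix x y assume xE: "x \<in> E" and y1: "norm y = 1" and yx: "y - x \<in> span (L1 \<union> L2)"
  define L where "L = span (L1 \<union> L2)"
  have mL: "m \<in> L" using m1 by (auto simp: L_def intro: span_base)
  show "y \<in> E"
  proof (cases "y \<bullet> m = 0")
    case False
    thus ?thesis using union_aux[OF s1 s2 m1 m2 i1 i2 cl sub xE y1 yx] by blast
  next
    case True
    obtain a b where aL: "a \<in> L" and b: "\<And>w. w \<in> L \<Longrightarrow> b \<bullet> w = 0" and yab: "y = a + b"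
      using orthogonal_subspace_decomp_exists[of "L1 \<union> L2" y] unfolding orthogonal_def L_def by metis
    have ba: "b \<bullet> a = 0" "a \<bullet> b = 0" "b \<bullet> m = 0" "m \<bullet> b = 0" using b[OF aL] b[OF mL] by (auto simp: inner_commute)
    have "y \<bullet> m = a \<bullet> m + b \<bullet> m" by (simp add: yab inner_add_left)
    hence am1: "a \<bullet> m = 0" using True ba(3) by simp
    hence am: "a \<bullet> m = 0" "m \<bullet> a = 0" by (simp_all add: inner_commute)
    have mm: "m \<bullet> m = 1" using m0 by (simp add: norm_eq_sqrt_inner)
    show ?thesis
    proof (cases "a = 0")
      case True
      hence yb: "y = b" using yab by simp
      have "y \<bullet> (y - x) = 0" using b yx by (simp add: yb L_def)
      have "x \<bullet> x = (y - (y - x)) \<bullet> (y - (y - x))" by simp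
      also have "\<dots> = y \<bullet> y - 2 * (y \<bullet> (y - x)) + (y - x) \<bullet> (y - x)"
        unfolding inner_diff_left inner_diff_right by (simp add: inner_commute)
      finally have "x \<bullet> x = y \<bullet> y - 2 * (y \<bullet> (y - x)) + (y - x) \<bullet> (y - x)" .
      moreover have "x \<bullet> x = 1" using xE sub by (auto simp: norm_eq_sqrt_inner)
      moreover have "y \<bullet> y = 1" using y1 by (simp add: norm_eq_sqrt_inner)
      ultimately have "(y - x) \<bullet> (y - x) = 0" using \<open>y \<bullet> (y - x) = 0\<close> by simp
      hence "y = x" by simp
      thus ?thesis using xE by simp
    next
      case False
      hence na: "norm a > 0" by simp
      define f where "f t = b + cos t *\<^sub>R a + (sin t * norm a) *\<^sub>R m" for t
      have "(f \<longlongrightarrow> f 0) (at_right 0)" unfolding f_def by (intro tendsto_intros)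
      moreover have "f 0 = y" by (simp add: f_def yab)
      moreover have "eventually (\<lambda>t. f t \<in> E) (at_right 0)"
        unfolding eventually_at_right_field
      proof (intro exI[of _ pi] conjI allI impI)
        show "0 < pi" by simp
        fix t assume t0: "0 < t" and tpi: "t < pi"
        have st: "sin t > 0" using t0 tpi sin_gt_zero by auto
        have "f t \<bullet> f t = b \<bullet> b + (cos t)^2 * (a \<bullet> a) + (sin t)^2 * (norm a)^2"
          by (simp add: f_def inner_add_left inner_add_right ba am mm power2_eq_square algebra_simps)
        also have "\<dots> = b \<bullet> b + a \<bullet> a"
          by (simp add: power2_norm_eq_inner[symmetric]) (metis distrib_right mult_1 sin_cos_squared_add2 add.commute)
        also have "\<dots> = y \<bullet> y" by (simp add: yab inner_add_left inner_add_right ba)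
        finally have n1: "norm (f t) = 1" using y1 by (simp add: norm_eq_sqrt_inner)
        have "f t - x = (y - x) + ((cos t - 1) *\<^sub>R a + (sin t * norm a) *\<^sub>R m)"
          by (simp add: f_def yab algebra_simps)
        moreover have "(cos t - 1) *\<^sub>R a + (sin t * norm a) *\<^sub>R m \<in> L"
          using aL mL by (simp add: L_def span_add span_mul)
        ultimately have "f t - x \<in> span (L1 \<union> L2)" using yx unfolding L_def by (metis span_add)
        moreover have "f t \<bullet> m \<noteq> 0"
          using st na by (simp add: f_def inner_add_left ba am mm)
        ultimately show "f t \<in> E" using union_aux[OF s1 s2 m1 m2 i1 i2 cl sub xE n1] by blast
      qed
      ultimately show ?thesis using Lim_in_closed_set[OF cl] by (metis trivial_limit_at_right_real)
    qed
  qed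
qed

definition rf :: "'a::euclidean_space \<Rightarrow> 'a \<Rightarrow> 'a" where
  "rf u x = (2 * (x \<bullet> u)) *\<^sub>R u - x"

lemma refl_eq:
  fixes u :: "'a::euclidean_space"
  assumes u1: "norm u = 1"
  shows "reflection (span {u}) x = rf u x"
proof -
  have uu: "u \<bullet> u = 1" using u1 by (simp add: norm_eq_sqrt_inner)
  have "(x \<bullet> u) *\<^sub>R u = closest_point (span {u}) x"
  proof (rule closest_point_unique)
    show "convex (span {u})" by (simp add: subspace_imp_convex)
    show "closed (span {u})" by (simp add: closed_subspace)
    show "(x \<bullet> u) *\<^sub>R u \<in> span {u}" by (simp add: span_mul span_base)
    show "\<forall>z\<in>span {u}. dist x ((x \<bullet> u) *\<^sub>R u) \<le> dist x z"
    proof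
      fix z assume "z \<in> span {u}"
      then obtain k where zk: "z = k *\<^sub>R u" by (auto simp: span_singleton)
      have "(x - (x \<bullet> u) *\<^sub>R u) \<bullet> (x - (x \<bullet> u) *\<^sub>R u) \<le> (x - k *\<^sub>R u) \<bullet> (x - k *\<^sub>R u)"
      proof -
        have "(x - k *\<^sub>R u) \<bullet> (x - k *\<^sub>R u) - (x - (x \<bullet> u) *\<^sub>R u) \<bullet> (x - (x \<bullet> u) *\<^sub>R u) = (k - x \<bullet> u)^2"
          by (simp add: inner_diff_left inner_diff_right uu inner_commute power2_eq_square algebra_simps)
        thus ?thesis by (smt (verit) zero_le_power2)
      qed
      thus "dist x ((x \<bullet> u) *\<^sub>R u) \<le> dist x z" by (simp add: dist_norm zk norm_le)
    qed
  qed
  thus ?thesis unfolding reflection_def orth_proj_def rf_def by (metis scaleR_scaleR)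
qed

lemma rf_rf: "norm u = 1 \<Longrightarrow> rf u (rf u x) = x"
  by (simp add: rf_def inner_diff_left norm_eq_sqrt_inner algebra_simps)

lemma rf_linear: "linear (rf u)"
  unfolding rf_def by (intro linear_compose_sub linearI) (auto simp: inner_add_left algebra_simps)

lemma rf_norm: "norm u = 1 \<Longrightarrow> norm (rf u x) = norm x"
  unfolding norm_eq_sqrt_inner rf_def
  by (simp add: inner_diff_left inner_diff_right power2_eq_square inner_commute algebra_simps)

lemma transport:
  assumes lin: "linear g" and inv: "\<And>x. g (g x) = x" and nm: "\<And>x. norm (g x) = norm x"
    and gE: "g ` E \<subseteq> E" and I: "Inv E L"
  shows "Inv E (g ` L)"
  unfolding Inv_def
proof (intro ballI allI impI)
  fix x y assume xE: "x \<in> E" and y1: "norm y = 1" and yx: "y - x \<in> g ` L"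
  then obtain l where l: "l \<in> L" "y - x = g l" by auto
  have "g y - g x = g (y - x)" using lin by (simp add: linear_diff)
  also have "\<dots> = l" using l inv by simp
  finally have "g y - g x \<in> L" using l by simp
  moreover have "g x \<in> E" using gE xE by auto
  moreover have "norm (g y) = 1" using nm y1 by simp
  ultimately have "g y \<in> E" using I unfolding Inv_def by blast
  hence "g (g y) \<in> E" using gE by auto
  thus "y \<in> E" using inv by simp
qed

definition rot :: "'a::euclidean_space \<Rightarrow> 'a \<Rightarrow> real \<Rightarrow> 'a \<Rightarrow> 'a" where
  "rot e1 e2 t x = x + ((cos t - 1) * (x \<bullet> e1) - sin t * (x \<bullet> e2)) *\<^sub>R e1
     + (sin t * (x \<bullet> e1) + (cos t - 1) * (x \<bullet> e2)) *\<^sub>R e2"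

locale onb =
  fixes e1 e2 :: "'a::euclidean_space"
  assumes e11: "e1 \<bullet> e1 = 1" and e22: "e2 \<bullet> e2 = 1" and e12: "e1 \<bullet> e2 = 0"
begin

lemma e21: "e2 \<bullet> e1 = 0" using e12 by (simp add: inner_commute)

lemma rot_e1: "rot e1 e2 t x \<bullet> e1 = cos t * (x \<bullet> e1) - sin t * (x \<bullet> e2)"
  by (simp add: rot_def inner_add_left e11 e12 e21 algebra_simps)

lemma rot_e2: "rot e1 e2 t x \<bullet> e2 = sin t * (x \<bullet> e1) + cos t * (x \<bullet> e2)"
  by (simp add: rot_def inner_add_left e22 e12 e21 algebra_simps)

lemma rot_add: "rot e1 e2 s (rot e1 e2 t x) = rot e1 e2 (s + t) x"
proof -
  have "rot e1 e2 s (rot e1 e2 t x) = rot e1 e2 t x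
     + ((cos s - 1) * (cos t * (x \<bullet> e1) - sin t * (x \<bullet> e2)) - sin s * (sin t * (x \<bullet> e1) + cos t * (x \<bullet> e2))) *\<^sub>R e1
     + (sin s * (cos t * (x \<bullet> e1) - sin t * (x \<bullet> e2)) + (cos s - 1) * (sin t * (x \<bullet> e1) + cos t * (x \<bullet> e2))) *\<^sub>R e2"
    by (simp only: rot_def[of e1 e2 s] rot_e1 rot_e2)
  also have "\<dots> = rot e1 e2 (s + t) x"
    by (simp add: rot_def cos_add sin_add algebra_simps)
  finally show ?thesis .
qed

lemma rot_period: "rot e1 e2 (t - 2 * pi * of_int h) = rot e1 e2 t"
proof -
  have "cos (t - 2 * pi * of_int h) = cos t" "sin (t - 2 * pi * of_int h) = sin t"
    by (simp_all add: cos_diff sin_diff)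
  thus ?thesis by (simp add: rot_def fun_eq_iff)
qed

lemma rot_cont: "continuous_on UNIV (\<lambda>t. rot e1 e2 t x)"
  unfolding rot_def by (intro continuous_intros)

end


lemma base:
  fixes a b :: "'a::euclidean_space"
  assumes a1: "norm a = 1" and b1: "norm b = 1" and c: "a \<bullet> b = c" and c1: "\<bar>c\<bar> < 1"
    and phc: "cos \<phi> = 2 * c^2 - 1" and phs: "sin \<phi> = 2 * c * sqrt (1 - c^2)"
    and irr: "\<phi> / (2 * pi) \<notin> \<rat>"
    and cl: "closed E" and sub: "E \<subseteq> sphere 0 1" and Ea: "rf a ` E \<subseteq> E" and Eb: "rf b ` E \<subseteq> E"
  shows "Inv E (span {a, b})"
proof -
  define s where "s = sqrt (1 - c^2)"
  have c2: "c^2 < 1" using c1 by (simp add: abs_less_iff power2_eq_square) (smt (verit) mult_less_cancel_left2 mult_minus_left mult_minus_right)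
  have s0: "s > 0" using c2 by (simp add: s_def)
  have ss: "s^2 = 1 - c^2" using c2 by (simp add: s_def)
  define e1 where "e1 = a"
  define e2 where "e2 = (1/s) *\<^sub>R (b - c *\<^sub>R a)"
  have aa: "a \<bullet> a = 1" and bb: "b \<bullet> b = 1" using a1 b1 by (simp_all add: norm_eq_sqrt_inner)
  have ba: "b \<bullet> a = c" using c by (simp add: inner_commute)
  have o: "onb e1 e2"
  proof
    show "e1 \<bullet> e1 = 1" by (simp add: e1_def aa)
    show "e1 \<bullet> e2 = 0" by (simp add: e1_def e2_def inner_diff_right aa c)
    have "e2 \<bullet> e2 = (1/s)^2 * ((b - c *\<^sub>R a) \<bullet> (b - c *\<^sub>R a))" by (simp add: e2_def power2_eq_square)
    also have "(b - c *\<^sub>R a) \<bullet> (b - c *\<^sub>R a) = s^2"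
      using ss by (simp add: inner_diff_left inner_diff_right aa bb c ba power2_eq_square)
    finally show "e2 \<bullet> e2 = 1" using s0 by (simp add: power2_eq_square)
  qed
  interpret onb e1 e2 by (rule o)
  have bdec: "b = c *\<^sub>R e1 + s *\<^sub>R e2" using s0 by (simp add: e1_def e2_def)
  have comp: "rf b (rf a x) = rot e1 e2 \<phi> x" for x
  proof -
    define al where "al = x \<bullet> e1"
    define be where "be = x \<bullet> e2"
    have xb: "x \<bullet> b = c * al + s * be" by (simp add: bdec inner_add_right al_def be_def)
    have "rf a x = (2 * al) *\<^sub>R e1 - x" by (simp add: rf_def al_def e1_def)
    hence "rf a x \<bullet> b = c * al - s * be"
      by (simp add: inner_diff_left xb) (simp add: bdec inner_add_right e11 e12 algebra_simps)
    hence "rf b (rf a x) = (2 * (c * al - s * be)) *\<^sub>R (c *\<^sub>R e1 + s *\<^sub>R e2) - ((2 * al) *\<^sub>R e1 - x)"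
      using \<open>rf a x = _\<close> by (simp add: rf_def bdec[symmetric])
    also have "\<dots> = x + (2 * c * c * al - 2 * c * s * be - 2 * al) *\<^sub>R e1 + (2 * c * s * al - 2 * s * s * be) *\<^sub>R e2"
      by (simp add: algebra_simps)
    also have "\<dots> = rot e1 e2 \<phi> x"
    proof -
      have sc: "s * s = 1 - c * c" using ss by (simp add: power2_eq_square)
      have ps: "sin \<phi> = 2 * c * s" using phs by (simp add: s_def)
      have pc: "cos \<phi> = 2 * c * c - 1" using phc by (simp add: power2_eq_square)
      have "2 * s * s * be = 2 * (1 - c * c) * be" using sc by (metis mult.assoc)
      with sc have "2 * c * c * al - 2 * c * s * be - 2 * al = (cos \<phi> - 1) * al - sin \<phi> * be"
        and "2 * c * s * al - 2 * s * s * be = sin \<phi> * al + (cos \<phi> - 1) * be"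
        by (simp_all add: pc ps algebra_simps)
      thus ?thesis by (simp add: rot_def al_def be_def)
    qed
    finally show ?thesis .
  qed
  have pw: "rot e1 e2 (real k * \<phi>) x \<in> E" if "x \<in> E" for k x
  proof (induction k)
    case 0 show ?case using that by (simp add: rot_def)
  next
    case (Suc k)
    have "rot e1 e2 (real (Suc k) * \<phi>) x = rot e1 e2 \<phi> (rot e1 e2 (real k * \<phi>) x)"
      by (simp add: rot_add algebra_simps)
    also have "\<dots> = rf b (rf a (rot e1 e2 (real k * \<phi>) x))" by (simp add: comp)
    also have "\<dots> \<in> E" using Suc Ea Eb by blast
    finally show ?case .
  qed
  have allrot: "rot e1 e2 t x \<in> E" if xE: "x \<in> E" for t x
  proof -
    define T where "T = (\<lambda>t. rot e1 e2 t x) -` E"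
    have "closed T" unfolding T_def
      using continuous_closed_vimage[OF cl, of "\<lambda>t. rot e1 e2 t x"] rot_cont[of x] by (simp add: continuous_on_eq_continuous_at)
    moreover have "t \<in> closure T"
      unfolding closure_approachable
    proof (intro allI impI)
      fix \<epsilon> :: real assume "\<epsilon> > 0"
      hence "\<epsilon> / (2 * pi) > 0" by simp
      then obtain h k :: int where k: "k > 0" and hk: "\<bar>of_int k * (\<phi> / (2 * pi)) - of_int h - t / (2 * pi)\<bar> < \<epsilon> / (2 * pi)"
        using sequence_of_fractional_parts_is_dense[OF irr] by metis
      define t' where "t' = of_int k * \<phi> - 2 * pi * of_int h"
      have "\<bar>t' - t\<bar> = 2 * pi * \<bar>of_int k * (\<phi> / (2 * pi)) - of_int h - t / (2 * pi)\<bar>"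
      proof -
        have "t' - t = (2 * pi) * (of_int k * (\<phi> / (2 * pi)) - of_int h - t / (2 * pi))"
          by (simp add: t'_def field_simps)
        hence "\<bar>t' - t\<bar> = \<bar>2 * pi\<bar> * \<bar>of_int k * (\<phi> / (2 * pi)) - of_int h - t / (2 * pi)\<bar>"
          by (simp only: abs_mult)
        thus ?thesis by simp
      qed
      also have "\<dots> < \<epsilon>" using hk by (simp add: field_simps)
      finally have d: "dist t' t < \<epsilon>" by (simp add: dist_real_def)
      have "rot e1 e2 t' x = rot e1 e2 (real (nat k) * \<phi>) x"
        using k by (simp add: t'_def rot_period)
      hence "t' \<in> T" using pw[OF xE] by (simp add: T_def)
      thus "\<exists>y\<in>T. dist y t < \<epsilon>" using d by blast
    qed
    ultimately show ?thesis by (simp add: T_def closure_closed)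
  qed
  show ?thesis unfolding Inv_def
  proof (intro ballI allI impI)
    fix x y assume xE: "x \<in> E" and y1: "norm y = 1" and yx: "y - x \<in> span {a, b}"
    have dec: "w = (w \<bullet> e1) *\<^sub>R e1 + (w \<bullet> e2) *\<^sub>R e2" if "w \<in> span {a, b}" for w
    proof -
      define K where "K = {w. (w \<bullet> e1) *\<^sub>R e1 + (w \<bullet> e2) *\<^sub>R e2 - w = 0}"
      have "linear (\<lambda>w. (w \<bullet> e1) *\<^sub>R e1 + (w \<bullet> e2) *\<^sub>R e2 - w)"
        by (rule linearI) (simp_all add: inner_add_left algebra_simps)
      hence "subspace K" unfolding K_def by (rule linear_subspace_kernel)
      moreover have "a \<in> K" unfolding K_def by (simp add: e1_def[symmetric] e11 e12)
      moreover have "b \<in> K" unfolding K_def by (simp add: bdec inner_add_left e11 e12 e21 e22)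
      ultimately have "w \<in> K" using that span_minimal[of "{a,b}" K] by blast
      thus ?thesis unfolding K_def by simp
    qed
    define p where "p = (y - x) \<bullet> e1"
    define q where "q = (y - x) \<bullet> e2"
    define al where "al = x \<bullet> e1"
    define be where "be = x \<bullet> e2"
    have "y = x + (y - x)" by simp
    also have "y - x = p *\<^sub>R e1 + q *\<^sub>R e2" using dec[OF yx] unfolding p_def q_def .
    finally have yeq: "y = x + p *\<^sub>R e1 + q *\<^sub>R e2" by (simp add: add.assoc)
    have xx: "x \<bullet> x = 1" using xE sub by (auto simp: norm_eq_sqrt_inner)
    have yy: "y \<bullet> y = 1" using y1 by (simp add: norm_eq_sqrt_inner)
    have ex: "e1 \<bullet> x = al" "e2 \<bullet> x = be" "x \<bullet> e1 = al" "x \<bullet> e2 = be"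
      by (simp_all add: al_def be_def inner_commute)
    have "y \<bullet> y = x \<bullet> x + 2 * p * al + 2 * q * be + p * p + q * q"
      by (simp add: yeq inner_add_left inner_add_right ex e11 e12 e21 e22 algebra_simps)
    hence eq0: "2 * p * al + 2 * q * be + p * p + q * q = 0" using xx yy by simp
    define r2 where "r2 = al * al + be * be"
    show "y \<in> E"
    proof (cases "r2 = 0")
      case True
      hence "al = 0" "be = 0" unfolding r2_def by (auto simp: add_nonneg_eq_0_iff)
      hence "p * p + q * q = 0" using eq0 by simp
      hence "p = 0" "q = 0" by (auto simp: add_nonneg_eq_0_iff)
      thus ?thesis using yeq xE by simp
    next
      case False
      define C where "C = (al * (al + p) + be * (be + q)) / r2"
      define S where "S = (al * (be + q) - be * (al + p)) / r2"
      have XY: "(al + p) * (al + p) + (be + q) * (be + q) = r2"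
        using eq0 unfolding r2_def by (simp add: algebra_simps)
      have "C^2 + S^2 = ((al * (al + p) + be * (be + q))^2 + (al * (be + q) - be * (al + p))^2) / r2^2"
        unfolding C_def S_def diff_divide_distrib[symmetric] power_divide add_divide_distrib[symmetric] ..
      also have "(al * (al + p) + be * (be + q))^2 + (al * (be + q) - be * (al + p))^2
          = r2 * ((al + p) * (al + p) + (be + q) * (be + q))"
        unfolding r2_def by (simp add: power2_eq_square algebra_simps)
      also have "\<dots> = r2^2" using XY by (simp add: power2_eq_square)
      finally have "C^2 + S^2 = 1" using False by simp
      then obtain t where ct: "C = cos t" and st: "S = sin t" using sincos_total_2pi by blast
      have N1: "(al * (al + p) + be * (be + q)) * al - (al * (be + q) - be * (al + p)) * be = (al + p) * r2"
        unfolding r2_def by (simp add: algebra_simps)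
      have "C * al - S * be = ((al * (al + p) + be * (be + q)) * al - (al * (be + q) - be * (al + p)) * be) / r2"
        unfolding C_def S_def by (simp add: diff_divide_distrib add_divide_distrib algebra_simps)
      hence "C * al - S * be = al + p" using False by (simp only: N1) simp
      moreover have N2: "(al * (be + q) - be * (al + p)) * al + (al * (al + p) + be * (be + q)) * be = (be + q) * r2"
        unfolding r2_def by (simp add: algebra_simps)
      have "S * al + C * be = ((al * (be + q) - be * (al + p)) * al + (al * (al + p) + be * (be + q)) * be) / r2"
        unfolding C_def S_def by (simp add: diff_divide_distrib add_divide_distrib algebra_simps)
      hence "S * al + C * be = be + q" using False by (simp only: N2) simp
      ultimately have "rot e1 e2 t x = y"
        by (simp add: rot_def yeq ex ct[symmetric] st[symmetric] algebra_simps)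
      thus ?thesis using allrot[OF xE, of t] by simp
    qed
  qed
qed


lemma line_basis:
  fixes S :: "'a::euclidean_space set"
  assumes "subspace S" "dim S = 1"
  shows "\<exists>v. norm v = 1 \<and> S = span {v}"
proof -
  obtain B where B: "B \<subseteq> S" "independent B" "S \<subseteq> span B" "card B = dim S"
    using basis_exists by blast
  have "card B = 1" using B(4) assms(2) by simp
  then obtain b where Bb: "B = {b}" by (rule card_1_singletonE)
  have b0: "b \<noteq> 0" using B(2) Bb dependent_zero by blast
  have Sb: "S = span {b}"
    using B Bb span_minimal[of "{b}" S] assms(1) by auto
  define v where "v = (1 / norm b) *\<^sub>R b"
  have "span {v} = span {b}"
  proof
    show "span {v} \<subseteq> span {b}" by (simp add: v_def span_minimal span_scale span_base)
    have "b = norm b *\<^sub>R v" using b0 by (simp add: v_def)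
    thus "span {b} \<subseteq> span {v}" by (metis span_minimal span_scale span_base singletonI subspace_span empty_subsetI insert_subset)
  qed
  moreover have "norm v = 1" using b0 by (simp add: v_def)
  ultimately show ?thesis using Sb by metis
qed

lemma rf_neg: "rf (- u) = rf u"
  by (simp add: rf_def fun_eq_iff)


theorem theorem3p2:
  fixes H :: "nat \<Rightarrow> (real ^ 'n) set"
    and E :: "(real ^ 'n) set"
  assumes n2: "CARD('n) \<ge> 2"
    and lines: "\<And>j. j \<in> {1..CARD('n)} \<Longrightarrow> subspace (H j) \<and> dim (H j) = 1"
    and irr: "\<exists>i\<in>{1..CARD('n)}. \<exists>j\<in>{1..CARD('n)}. \<exists>u v. u \<in> H i \<and> v \<in> H j \<and>
               u \<noteq> 0 \<and> v \<noteq> 0 \<and> line_angle u v / pi \<notin> \<rat>"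
    and sum_all: "{\<Sum>j\<in>{1..CARD('n)}. x j | x. \<forall>j\<in>{1..CARD('n)}. x j \<in> H j} = UNIV"
    and indec: "\<not> (\<exists>A B. A \<noteq> {} \<and> B \<noteq> {} \<and> A \<inter> B = {} \<and> A \<union> B = {1..CARD('n)} \<and>
               (\<forall>i\<in>A. \<forall>j\<in>B. \<forall>x\<in>H i. \<forall>y\<in>H j. orthogonal x y))"
    and E_sub: "E \<subseteq> sphere 0 1"
    and E_ne: "E \<noteq> {}"
    and E_closed: "closed E"
    and E_inv: "\<And>j. j \<in> {1..CARD('n)} \<Longrightarrow> reflection (H j) ` E = E"
  shows "E = sphere 0 1"
proof -
  define I where "I = {1..CARD('n)}"
  have finI: "finite I" by (simp add: I_def)
  have "\<forall>j\<in>I. \<exists>v. norm v = 1 \<and> H j = span {v}"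
    using lines line_basis unfolding I_def by blast
  then obtain u where u: "\<And>j. j \<in> I \<Longrightarrow> norm (u j) = 1 \<and> H j = span {u j}"
    by metis
  have u1: "norm (u j) = 1" "u j \<bullet> u j = 1" if "j \<in> I" for j
    using u[OF that] by (auto simp: norm_eq_sqrt_inner)
  have Hu: "x \<in> H j \<longleftrightarrow> (\<exists>k. x = k *\<^sub>R u j)" if "j \<in> I" for j x
    using u[OF that] by (auto simp: span_singleton)
  have Einv: "rf (u j) ` E \<subseteq> E" if "j \<in> I" for j
  proof -
    have "reflection (H j) = rf (u j)" using u[OF that] refl_eq by (auto simp: fun_eq_iff)
    thus ?thesis using E_inv[of j] that by (simp add: I_def)
  qed
  obtain i j u0 v0 where ij: "i \<in> I" "j \<in> I" and u0: "u0 \<in> H i" "u0 \<noteq> 0" and v0: "v0 \<in> H j" "v0 \<noteq> 0"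
    and ang: "line_angle u0 v0 / pi \<notin> \<rat>"
    using irr unfolding I_def by blast
  obtain k1 where k1: "u0 = k1 *\<^sub>R u i" using Hu[OF ij(1)] u0 by blast
  obtain k2 where k2: "v0 = k2 *\<^sub>R u j" using Hu[OF ij(2)] v0 by blast
  have k10: "k1 \<noteq> 0" "k2 \<noteq> 0" using k1 k2 u0 v0 by auto
  define c where "c = \<bar>u i \<bullet> u j\<bar>"
  have "line_angle u0 v0 = arccos c"
    using k10 u1[OF ij(1)] u1[OF ij(2)]
    by (simp add: line_angle_def k1 k2 c_def abs_mult)
  hence angc: "arccos c / pi \<notin> \<rat>" using ang by simp
  have c0: "0 \<le> c" by (simp add: c_def)
  have cle: "c \<le> 1" using Cauchy_Schwarz_ineq2[of "u i" "u j"] u1[OF ij(1)] u1[OF ij(2)] by (simp add: c_def)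
  have cne: "c \<noteq> 1" using angc by auto
  hence clt: "c < 1" using cle by simp
  define a where "a = u i"
  define b where "b = (if u i \<bullet> u j \<ge> 0 then u j else - u j)"
  have a1: "norm a = 1" using u1[OF ij(1)] by (simp add: a_def)
  have b1: "norm b = 1" using u1[OF ij(2)] by (simp add: b_def)
  have abc: "a \<bullet> b = c" by (simp add: a_def b_def c_def)
  have rfb: "rf b = rf (u j)" by (simp add: b_def rf_neg)
  define \<theta> where "\<theta> = arccos c"
  have ct: "cos \<theta> = c" using c0 cle by (simp add: \<theta>_def)
  have st: "sin \<theta> = sqrt (1 - c^2)" using c0 cle by (simp add: \<theta>_def sin_arccos)
  have Inv0: "Inv E (span {a, b})"
  proof (rule base[OF a1 b1 abc])
    show "\<bar>c\<bar> < 1" using c0 clt by simp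
    show "cos (2 * \<theta>) = 2 * c^2 - 1" by (simp add: cos_double_cos ct)
    show "sin (2 * \<theta>) = 2 * c * sqrt (1 - c^2)" by (simp add: sin_double ct st)
    show "2 * \<theta> / (2 * pi) \<notin> \<rat>" using angc by (simp add: \<theta>_def)
    show "closed E" by (rule E_closed)
    show "E \<subseteq> sphere 0 1" by (rule E_sub)
    show "rf a ` E \<subseteq> E" using Einv[OF ij(1)] by (simp add: a_def)
    show "rf b ` E \<subseteq> E" using Einv[OF ij(2)] by (simp add: rfb)
  qed
  have notpar: "p = 0 \<and> q = 0" if "p *\<^sub>R u i = q *\<^sub>R u j" for p q
  proof (rule ccontr)
    assume nz: "\<not> (p = 0 \<and> q = 0)"
    have "p \<noteq> 0"
    proof
      assume "p = 0"
      hence "q *\<^sub>R u j = 0" using that by simp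
      thus False using nz \<open>p = 0\<close> u1[OF ij(2)] by auto
    qed
    have "u i = (1 / p) *\<^sub>R (p *\<^sub>R u i)" using \<open>p \<noteq> 0\<close> by simp
    also have "\<dots> = (q / p) *\<^sub>R u j" using that by simp
    finally have ui: "u i = (q / p) *\<^sub>R u j" .
    hence "norm (u i) = \<bar>q / p\<bar>" using u1[OF ij(2)] by (simp only: norm_scaleR mult_1_right)
    hence qp1: "\<bar>q / p\<bar> = 1" using u1[OF ij(1)] by linarith
    have "u i \<bullet> u j = q / p" using ui u1[OF ij(2)] by simp
    hence "c = 1" using qp1 by (simp only: c_def)
    thus False using cne by simp
  qed
  define U where "U A = span (u ` A)" for A
  have claim: "Inv E (U I)" if "i \<in> A" "j \<in> A" "A \<subseteq> I" "Inv E (U A)" for A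
    using that
  proof (induction "card (I - A)" arbitrary: A rule: less_induct)
    case less
    show ?case
    proof (cases "A = I")
      case True thus ?thesis using less.prems by simp
    next
      case False
      define B where "B = I - A"
      have "B \<noteq> {}" using False less.prems(3) by (auto simp: B_def)
      moreover have "A \<noteq> {}" using less.prems(1) by auto
      moreover have "A \<inter> B = {}" "A \<union> B = I" using less.prems(3) by (auto simp: B_def)
      ultimately have "\<not> (\<forall>i\<in>A. \<forall>j\<in>B. \<forall>x\<in>H i. \<forall>y\<in>H j. orthogonal x y)"
        using indec unfolding I_def by metis
      then obtain a' k x y where a': "a' \<in> A" and k: "k \<in> B" and x: "x \<in> H a'" and y: "y \<in> H k"
        and nort: "\<not> orthogonal x y" by blast
      have a'I: "a' \<in> I" and kI: "k \<in> I" and kA: "k \<notin> A" using a' k less.prems(3) by (auto simp: B_def)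
      obtain s1 where s1: "x = s1 *\<^sub>R u a'" using Hu[OF a'I] x by blast
      obtain s2 where s2: "y = s2 *\<^sub>R u k" using Hu[OF kI] y by blast
      define w where "w = u k"
      have aw: "u a' \<bullet> w \<noteq> 0" using nort by (simp add: orthogonal_def s1 s2 w_def)
      have w1: "norm w = 1" using u1[OF kI] by (simp add: w_def)
      define L where "L = U A"
      have subL: "subspace L" by (simp add: L_def U_def)
      have uL: "u l \<in> L" if "l \<in> A" for l using that by (simp add: L_def U_def span_base)
      define L' where "L' = rf w ` L"
      have subL': "subspace L'" unfolding L'_def using rf_linear subL by (rule linear_subspace_image)
      have InvL': "Inv E L'" unfolding L'_def
        by (rule transport[OF rf_linear]) (use rf_rf[OF w1] rf_norm[OF w1] Einv[OF kI] less.prems(4) in \<open>auto simp: w_def L_def\<close>)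
      define m where "m = (if u i \<bullet> w = 0 then u i else if u j \<bullet> w = 0 then u j
                          else (u j \<bullet> w) *\<^sub>R u i - (u i \<bullet> w) *\<^sub>R u j)"
      have mw: "m \<bullet> w = 0" by (simp add: m_def inner_diff_left)
      have mL: "m \<in> L" using uL[OF less.prems(1)] uL[OF less.prems(2)] subL
        by (simp add: m_def subspace_diff subspace_scale)
      have m0: "m \<noteq> 0"
      proof -
        have "u i \<noteq> 0" "u j \<noteq> 0" using u1[OF ij(1)] u1[OF ij(2)] by auto
        moreover have "(u j \<bullet> w) *\<^sub>R u i - (u i \<bullet> w) *\<^sub>R u j \<noteq> 0" if "u j \<bullet> w \<noteq> 0"
          using notpar[of "u j \<bullet> w" "u i \<bullet> w"] that by auto
        ultimately show ?thesis by (auto simp: m_def)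
      qed
      have mL': "m \<in> L'"
      proof -
        have "rf w (- m) = m" by (simp add: rf_def mw)
        moreover have "- m \<in> L" using mL subL by (simp add: subspace_neg)
        ultimately show ?thesis unfolding L'_def by (metis image_eqI)
      qed
      define m' where "m' = (1 / norm m) *\<^sub>R m"
      have m'1: "norm m' = 1" using m0 by (simp add: m'_def)
      have m'L: "m' \<in> L" "m' \<in> L'" using mL mL' subL subL' by (simp_all add: m'_def subspace_scale)
      have InvU: "Inv E (span (L \<union> L'))"
        by (rule union[OF subL subL' m'L m'1 less.prems(4)[folded L_def] InvL' E_closed E_sub])
      have sub2: "U (insert k A) \<subseteq> span (L \<union> L')"
        unfolding U_def
      proof (rule span_minimal)
        show "subspace (span (L \<union> L'))" by simp
        have "rf w (u a') \<in> L'" using uL[OF a'] by (simp add: L'_def)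
        hence "rf w (u a') + u a' \<in> span (L \<union> L')" using uL[OF a'] by (simp add: span_add span_base)
        moreover have "w = (1 / (2 * (u a' \<bullet> w))) *\<^sub>R (rf w (u a') + u a')"
          using aw by (simp add: rf_def)
        ultimately have "w \<in> span (L \<union> L')" by (metis span_scale)
        thus "u ` insert k A \<subseteq> span (L \<union> L')" using uL by (auto simp: w_def span_base)
      qed
      have "Inv E (U (insert k A))" using Inv_mono[OF InvU sub2] .
      moreover have "card (I - insert k A) < card (I - A)"
      proof -
        have "I - insert k A = (I - A) - {k}" by auto
        moreover have "k \<in> I - A" using kI kA by simp
        moreover have "finite (I - A)" using finI by simp
        ultimately show ?thesis using card_Diff1_less[of "I - A" k] by simp
      qed
      ultimately show ?thesis using less.hyps less.prems kI by auto
    qed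
  qed
  have "span {u i, u j} \<subseteq> span {a, b}"
  proof (rule span_minimal)
    have "b \<in> span {a, b}" "a \<in> span {a, b}" by (simp_all add: span_base)
    hence "- b \<in> span {a, b}" by (simp add: span_neg)
    hence "u j \<in> span {a, b}" using \<open>b \<in> span {a, b}\<close> by (cases "u i \<bullet> u j \<ge> 0") (auto simp: b_def)
    thus "{u i, u j} \<subseteq> span {a, b}" using \<open>a \<in> span {a, b}\<close> by (simp add: a_def)
  qed simp
  hence "Inv E (U {i, j})" using Inv_mono[OF Inv0] by (simp add: U_def)
  hence InvI: "Inv E (U I)" using claim[of "{i, j}"] ij by auto
  have UI: "U I = UNIV"
  proof -
    have "z \<in> U I" for z
    proof -
      have "z \<in> {\<Sum>j\<in>I. x j | x. \<forall>j\<in>I. x j \<in> H j}" using sum_all by (simp add: I_def)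
      then obtain x where z: "z = (\<Sum>j\<in>I. x j)" and x: "\<forall>j\<in>I. x j \<in> H j" by blast
      have "x l \<in> U I" if lI: "l \<in> I" for l
      proof -
        obtain k where "x l = k *\<^sub>R u l" using Hu[OF lI] x lI by blast
        thus ?thesis using lI by (simp add: U_def span_scale span_base)
      qed
      thus ?thesis unfolding z U_def by (simp add: span_sum)
    qed
    thus ?thesis by auto
  qed
  obtain x0 where x0: "x0 \<in> E" using E_ne by blast
  have "sphere 0 1 \<subseteq> E"
  proof
    fix y :: "real ^ 'n" assume "y \<in> sphere 0 1"
    hence "norm y = 1" by simp
    thus "y \<in> E" using InvI x0 UI unfolding Inv_def by auto
  qed
  thus ?thesis using E_sub by blast
qed

end
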